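(* Consider the control problem described in the context, and assume that the set $\mathfrak U$ of admissible controls is weakly compact in $L_2^m[0,1]$ and the goal set $\mathbf Q$ is closed in $\mathbb R^n$. Then the problem has a solution: there exists $\mathbf u^0(\cdot)\in\mathfrak U$ with $\varphi(\mathbf u^0(\cdot))=\max_{\mathbf u(\cdot)\in\mathfrak U}\varphi(\mathbf u(\cdot))$.
   Context: Let $(\Omega,\mathfrak F,\mathbf P)$ be a complete probability space, $\xi_1,\dots,\xi_N$ real random variables on it, and $0=t_0<t_1<\dots<t_N=1$. Define the random process $\xi(t,\omega)=\xi_i(\omega)$ for $t\in[t_{i-1},t_i)$, $i=1,\dots,N$. Let $A(t)$, $B(t)$, $\mathbf f(t)$ be deterministic matrices of sizes $n\times n$, $n\times m$, $n\times 1$ with Lebesgue-summable entries on $[0,1]$, the entries of $B$ being moreover square-summable; let $\mathbf x_0\in\mathbb R^n$ be nonrandom and $\mathbf Q\subset\mathbb R^n$ a nonrandom Borel set. For a measurable deterministic control $\mathbf u(\cdot)\in L_2^m[0,1]$, $\mathbf x_u(t)$ denotes the (unique, with absolutely continuous trajectories) solution of $$\tfrac{d}{dt}\mathbf x=A(t)\mathbf x+\xi(t)B(t)\mathbf u(t)+\mathbf f(t),\ 0\le t\le1,\qquad \mathbf x(0)=\mathbf x_0,$$ and the cost functional is $\varphi(\mathbf u(\cdot))=\mathbf P(\mathbf x_u(1)\in\mathbf Q)$, to be maximized over the set $\mathfrak U$ of admissible controls, which consists of measurable deterministic functions $\mathbf u:[0,1]\to\mathbf V$ for a fixed set $\mathbf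 V\subset\mathbb R^m$ (belonging to $L_2^m[0,1]$). *)

theory Defs
  imports "HOL-Probability.Probability"
begin

definition L2_01 :: "(real \<Rightarrow> 'b::euclidean_space) \<Rightarrow> bool" where
  "L2_01 g \<longleftrightarrow> g measurable_on {0..1} \<and> (\<lambda>s. (norm (g s))\<^sup>2) integrable_on {0..1}"

definition weak_L2_topology :: "(real \<Rightarrow> real^'m) topology" where
  "weak_L2_topology = topology_generated_by
     {{u. integral {0..1} (\<lambda>s. u s \<bullet> g s) \<in> W} | g W. L2_01 g \<and> open W}"

definition xi_proc :: "nat \<Rightarrow> (nat \<Rightarrow> real) \<Rightarrow> (nat \<Rightarrow> 'a \<Rightarrow> real) \<Rightarrow> real \<Rightarrow> 'a \<Rightarrow> real" where
  "xi_proc N tt \<xi> s \<omega> = (\<Sum>i\<in>{1..N}. if tt (i - 1) \<le> s \<and> s < tt i then \<xi> i \<omega> else 0)"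

text \<open>x is an (absolutely continuous, Caratheodory) solution on [0,1] of
  x' = A x + xi B u + f, x(0) = x0, for the fixed outcome w.\<close>
definition is_solution ::
  "nat \<Rightarrow> (nat \<Rightarrow> real) \<Rightarrow> (nat \<Rightarrow> 'a \<Rightarrow> real) \<Rightarrow> (real \<Rightarrow> real^'n^'n) \<Rightarrow> (real \<Rightarrow> real^'m^'n)
   \<Rightarrow> (real \<Rightarrow> real^'n) \<Rightarrow> real^'n \<Rightarrow> (real \<Rightarrow> real^'m) \<Rightarrow> 'a \<Rightarrow> (real \<Rightarrow> real^'n) \<Rightarrow> bool" where
  "is_solution N tt \<xi> A B f x0 u \<omega> x \<longleftrightarrow>
     (let rhs = (\<lambda>r. A r *v x r + xi_proc N tt \<xi> r \<omega> *\<^sub>R (B r *v u r) + f r) in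
       rhs absolutely_integrable_on {0..1} \<and>
       (\<forall>s\<in>{0..1}. x s = x0 + integral {0..s} rhs))"

definition terminal_state ::
  "nat \<Rightarrow> (nat \<Rightarrow> real) \<Rightarrow> (nat \<Rightarrow> 'a \<Rightarrow> real) \<Rightarrow> (real \<Rightarrow> real^'n^'n) \<Rightarrow> (real \<Rightarrow> real^'m^'n)
   \<Rightarrow> (real \<Rightarrow> real^'n) \<Rightarrow> real^'n \<Rightarrow> (real \<Rightarrow> real^'m) \<Rightarrow> 'a \<Rightarrow> real^'n" where
  "terminal_state N tt \<xi> A B f x0 u \<omega> =
     (THE y. \<exists>x. is_solution N tt \<xi> A B f x0 u \<omega> x \<and> x 1 = y)"

definition cost ::
  "'a measure \<Rightarrow> nat \<Rightarrow> (nat \<Rightarrow> real) \<Rightarrow> (nat \<Rightarrow> 'a \<Rightarrow> real) \<Rightarrow> (real \<Rightarrow> real^'n^'n) \<Rightarrow> (real \<Rightarrow> real^'m^'n)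
   \<Rightarrow> (real \<Rightarrow> real^'n) \<Rightarrow> real^'n \<Rightarrow> (real^'n) set \<Rightarrow> (real \<Rightarrow> real^'m) \<Rightarrow> real" where
  "cost M N tt \<xi> A B f x0 Q u =
     measure M {\<omega> \<in> space M. terminal_state N tt \<xi> A B f x0 u \<omega> \<in> Q}"

definition admissible :: "(real^'m) set \<Rightarrow> (real \<Rightarrow> real^'m) set" where
  "admissible V = {u. L2_01 u \<and> (\<forall>t\<in>{0..1}. u t \<in> V)}"

end

theory Submission
  imports Defs "HOL-Probability.Probability"
begin

lemma sf_leb: "sigma_finite_measure (lebesgue :: 'a::euclidean_space measure)"
proof -
  obtain A :: "'a set set" where "countable A" "A \<subseteq> sets lborel" "\<Union>A = space lborel" "\<forall>a\<in>A. emeasure lborel a \<noteq> \<infinity>"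
    using lborel.sigma_finite_countable by blast
  then show ?thesis unfolding sigma_finite_measure_def
    by (intro exI[of _ A]) auto
qed

lemma cont_bounded_product_ai:
  fixes F :: "real \<Rightarrow> real"
  assumes "F absolutely_integrable_on {a..b}" "continuous_on {a..b} g"
  shows "(\<lambda>s. g s * F s) absolutely_integrable_on {a..b}"
proof (rule absolutely_integrable_bounded_measurable_product_real[OF _ _ _ assms(1)])
  show "g \<in> borel_measurable (lebesgue_on {a..b})"
    using assms(2) by (simp add: continuous_imp_measurable_on_sets_lebesgue measurable_on_iff_borel_measurable[symmetric])
  show "bounded (g ` {a..b})" using assms(2) compact_Icc compact_continuous_image compact_imp_bounded by blast
qed auto

lemma fubini_tri:
  fixes F G :: "real \<Rightarrow> real"
  assumes F: "F absolutely_integrable_on {0..1}" and G: "G absolutely_integrable_on {0..1}"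
  shows "integral {0..1} (\<lambda>s. F s * integral {s..1} G) = integral {0..1} (\<lambda>r. integral {0..r} F * G r)"
proof -
  interpret L: sigma_finite_measure "lebesgue::real measure" by (rule sf_leb)
  interpret P: pair_sigma_finite "lebesgue::real measure" "lebesgue::real measure" ..
  have mid: "(\<lambda>a::real. a) \<in> borel_measurable lebesgue"
    using measurable_completion[of "\<lambda>a::real. a" lborel borel] by simp
  define F' where "F' s = indicator {0..1::real} s * F s" for s
  define G' where "G' s = indicator {0..1::real} s * G s" for s
  have iF: "integrable lebesgue F'" using F unfolding set_integrable_def F'_def by simp
  have iG: "integrable lebesgue G'" using G unfolding set_integrable_def G'_def by simp
  have mF[measurable]: "F' \<in> borel_measurable lebesgue" using iF by auto
  have mG[measurable]: "G' \<in> borel_measurable lebesgue" using iG by auto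
  have mfst[measurable]: "(\<lambda>x::real\<times>real. fst x) \<in> borel_measurable (lebesgue \<Otimes>\<^sub>M lebesgue)"
    by (rule measurable_compose[OF measurable_fst]) (rule mid)
  have msnd[measurable]: "(\<lambda>x::real\<times>real. snd x) \<in> borel_measurable (lebesgue \<Otimes>\<^sub>M lebesgue)"
    by (rule measurable_compose[OF measurable_snd]) (rule mid)
  have int1: "integrable (lebesgue \<Otimes>\<^sub>M lebesgue) (\<lambda>(s,r). F' s * G' r)"
  proof (rule P.Fubini_integrable)
    show "(\<lambda>(s,r). F' s * G' r) \<in> borel_measurable (lebesgue \<Otimes>\<^sub>M lebesgue)" by measurable
    have "(\<lambda>x. \<integral>y. norm (case (x, y) of (s, r) \<Rightarrow> F' s * G' r) \<partial>lebesgue) = (\<lambda>x. \<bar>F' x\<bar> * (\<integral>y. \<bar>G' y\<bar> \<partial>lebesgue))"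
      by (simp add: abs_mult)
    then show "integrable lebesgue (\<lambda>x. \<integral>y. norm (case (x, y) of (s, r) \<Rightarrow> F' s * G' r) \<partial>lebesgue)"
      using iF by simp
    show "AE x in lebesgue. integrable lebesgue (\<lambda>y. case (x, y) of (s, r) \<Rightarrow> F' s * G' r)"
      using iG by simp
  qed
  define H where "H s r = F' s * G' r * (if s \<le> r then 1 else 0)" for s r :: real
  have int2: "integrable (lebesgue \<Otimes>\<^sub>M lebesgue) (case_prod H)"
  proof (rule Bochner_Integration.integrable_bound[OF int1])
    show "case_prod H \<in> borel_measurable (lebesgue \<Otimes>\<^sub>M lebesgue)"
      unfolding H_def by measurable
    show "AE x in lebesgue \<Otimes>\<^sub>M lebesgue. norm (case_prod H x) \<le> norm (case x of (s, r) \<Rightarrow> F' s * G' r)"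
      by (auto simp: H_def abs_mult)
  qed
  have fub: "(\<integral>r. (\<integral>s. H s r \<partial>lebesgue) \<partial>lebesgue) = (\<integral>s. (\<integral>r. H s r \<partial>lebesgue) \<partial>lebesgue)"
    by (rule P.Fubini_integral[OF int2])
  have in1: "(\<integral>r. H s r \<partial>lebesgue) = indicator {0..1} s * (F s * integral {s..1} G)" for s
  proof (cases "s \<in> {0..1}")
    case True
    have "(\<integral>r. H s r \<partial>lebesgue) = (\<integral>r. F s * (indicator {s..1} r * G r) \<partial>lebesgue)"
      using True unfolding H_def F'_def G'_def
      by (intro Bochner_Integration.integral_cong) (auto simp: indicator_def)
    then have "(\<integral>r. H s r \<partial>lebesgue) = F s * (\<integral>r. indicator {s..1} r * G r \<partial>lebesgue)"
      by simp
    also have "(\<integral>r. indicator {s..1} r * G r \<partial>lebesgue) = integral {s..1} G"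
      using set_lebesgue_integral_eq_integral(2)[OF absolutely_integrable_on_subinterval[OF G, of s 1]] True
      by (simp add: set_lebesgue_integral_def)
    finally show ?thesis using True by simp
  qed (simp add: H_def F'_def)
  have in2: "(\<integral>s. H s r \<partial>lebesgue) = indicator {0..1} r * (integral {0..r} F * G r)" for r
  proof (cases "r \<in> {0..1}")
    case True
    have "(\<integral>s. H s r \<partial>lebesgue) = (\<integral>s. (indicator {0..r} s * F s) * G r \<partial>lebesgue)"
      using True unfolding H_def F'_def G'_def
      by (intro Bochner_Integration.integral_cong) (auto simp: indicator_def)
    then have "(\<integral>s. H s r \<partial>lebesgue) = (\<integral>s. indicator {0..r} s * F s \<partial>lebesgue) * G r"
      by simp
    also have "(\<integral>s. indicator {0..r} s * F s \<partial>lebesgue) = integral {0..r} F"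
      using set_lebesgue_integral_eq_integral(2)[OF absolutely_integrable_on_subinterval[OF F, of 0 r]] True
      by (simp add: set_lebesgue_integral_def)
    finally show ?thesis using True by simp
  qed (simp add: H_def G'_def)
  have c1: "continuous_on {0..1} (\<lambda>s. integral {s..1} G)"
    by (rule indefinite_integral_continuous_1') (use G in \<open>simp add: absolutely_integrable_on_def\<close>)
  have c2: "continuous_on {0..1} (\<lambda>s. integral {0..s} F)"
    by (rule indefinite_integral_continuous_1) (use F in \<open>simp add: absolutely_integrable_on_def\<close>)
  have a1: "(\<lambda>s. F s * integral {s..1} G) absolutely_integrable_on {0..1}"
    using cont_bounded_product_ai[OF F c1] by (simp add: mult.commute)
  have a2: "(\<lambda>s. integral {0..s} F * G s) absolutely_integrable_on {0..1}"
    using cont_bounded_product_ai[OF G c2] by simp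
  have "integral {0..1} (\<lambda>s. F s * integral {s..1} G) = (\<integral>s. (\<integral>r. H s r \<partial>lebesgue) \<partial>lebesgue)"
    using set_lebesgue_integral_eq_integral(2)[OF a1] by (simp add: set_lebesgue_integral_def in1)
  also have "\<dots> = (\<integral>r. (\<integral>s. H s r \<partial>lebesgue) \<partial>lebesgue)" using fub by simp
  also have "\<dots> = integral {0..1} (\<lambda>r. integral {0..r} F * G r)"
    using set_lebesgue_integral_eq_integral(2)[OF a2] by (simp add: set_lebesgue_integral_def in2)
  finally show ?thesis .
qed


lemma ai_comp: fixes Y :: "real \<Rightarrow> real^'n"
  shows "Y absolutely_integrable_on {a..b} \<Longrightarrow> (\<lambda>s. Y s $ k) absolutely_integrable_on {a..b}"
  using absolutely_integrable_on_iff_component[of "{a..b}" Y] by auto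

lemma ai_int: fixes f :: "'a::euclidean_space \<Rightarrow> 'b::euclidean_space"
  shows "f absolutely_integrable_on S \<Longrightarrow> f integrable_on S"
  using set_lebesgue_integral_eq_integral(1) by blast

lemma duality:
  fixes Y P :: "real \<Rightarrow> real^'n" and e :: "real^'n"
  assumes Y: "Y absolutely_integrable_on {0..1}" and P: "P absolutely_integrable_on {0..1}"
  shows "integral {0..1} (\<lambda>s. Y s \<bullet> (e + integral {s..1} P)) =
         integral {0..1} Y \<bullet> e + integral {0..1} (\<lambda>s. integral {0..s} Y \<bullet> P s)"
proof -
  have Yk: "(\<lambda>s. Y s $ k) absolutely_integrable_on {0..1}" for k using ai_comp[OF Y] .
  have Pk: "(\<lambda>s. P s $ k) absolutely_integrable_on {0..1}" for k using ai_comp[OF P] .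
  have Psub: "P integrable_on {s..1}" if "s \<in> {0..1}" for s
    using ai_int[OF absolutely_integrable_on_subinterval[OF P, of s 1]] that by auto
  have Ysub: "Y integrable_on {0..s}" if "s \<in> {0..1}" for s
    using ai_int[OF absolutely_integrable_on_subinterval[OF Y, of 0 s]] that by auto
  have c1: "continuous_on {0..1} (\<lambda>s. integral {s..1} (\<lambda>r. P r $ k))" for k
    by (rule indefinite_integral_continuous_1') (rule ai_int[OF Pk])
  have c2: "continuous_on {0..1} (\<lambda>s. integral {0..s} (\<lambda>r. Y r $ k))" for k
    by (rule indefinite_integral_continuous_1) (rule ai_int[OF Yk])
  have i1: "(\<lambda>s. Y s $ k * integral {s..1} (\<lambda>r. P r $ k)) integrable_on {0..1}" for k
    using ai_int[OF cont_bounded_product_ai[OF Yk c1]] by (simp add: mult.commute)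
  have i2: "(\<lambda>s. integral {0..s} (\<lambda>r. Y r $ k) * P s $ k) integrable_on {0..1}" for k
    using ai_int[OF cont_bounded_product_ai[OF Pk c2]] by simp
  have i3: "(\<lambda>s. Y s $ k * e $ k) integrable_on {0..1}" for k
    using ai_int[OF Yk] by (simp add: integrable_on_mult_left)
  have "integral {0..1} (\<lambda>s. Y s \<bullet> (e + integral {s..1} P)) =
        integral {0..1} (\<lambda>s. \<Sum>k\<in>UNIV. Y s $ k * e $ k + Y s $ k * integral {s..1} (\<lambda>r. P r $ k))"
    by (intro integral_cong) (auto simp: inner_vec_def integral_component_eq_cart[OF Psub] algebra_simps)
  also have "\<dots> = (\<Sum>k\<in>UNIV. integral {0..1} (\<lambda>s. Y s $ k * e $ k) + integral {0..1} (\<lambda>s. Y s $ k * integral {s..1} (\<lambda>r. P r $ k)))"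
    by (subst integral_sum) (auto intro!: integrable_add i1 i3 simp: integral_add[OF i3 i1])
  also have "\<dots> = (\<Sum>k\<in>UNIV. integral {0..1} (\<lambda>s. Y s $ k) * e $ k + integral {0..1} (\<lambda>s. integral {0..s} (\<lambda>r. Y r $ k) * P s $ k))"
    by (simp add: fubini_tri[OF Yk Pk])
  also have "\<dots> = integral {0..1} Y \<bullet> e + (\<Sum>k\<in>UNIV. integral {0..1} (\<lambda>s. integral {0..s} (\<lambda>r. Y r $ k) * P s $ k))"
    by (simp add: sum.distrib inner_vec_def integral_component_eq_cart[OF ai_int[OF Y]])
  also have "(\<Sum>k\<in>UNIV. integral {0..1} (\<lambda>s. integral {0..s} (\<lambda>r. Y r $ k) * P s $ k)) = integral {0..1} (\<lambda>s. integral {0..s} Y \<bullet> P s)"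
    by (subst integral_sum[symmetric]) (auto intro!: i2 integral_cong simp: inner_vec_def integral_component_eq_cart[OF Ysub])
  finally show ?thesis .
qed


definition kap :: "(real \<Rightarrow> real^'n^'n) \<Rightarrow> real \<Rightarrow> real" where
  "kap K r = (\<Sum>i\<in>UNIV. \<Sum>j\<in>UNIV. \<bar>K r $ i $ j\<bar>)"

lemma kap_nonneg: "0 \<le> kap K r"
  unfolding kap_def by (auto intro!: sum_nonneg)

lemma Kv_bound: "norm (K r *v v) \<le> kap K r * norm v"
proof -
  have "norm (K r *v v) \<le> (\<Sum>i\<in>UNIV. \<bar>(K r *v v) $ i\<bar>)" by (rule norm_le_l1_cart)
  also have "\<dots> \<le> (\<Sum>i\<in>UNIV. \<Sum>j\<in>UNIV. \<bar>K r $ i $ j\<bar> * norm v)"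
  proof (rule sum_mono)
    fix i
    have "\<bar>(K r *v v) $ i\<bar> = \<bar>\<Sum>j\<in>UNIV. K r $ i $ j * v $ j\<bar>" by (simp add: matrix_vector_mult_def)
    also have "\<dots> \<le> (\<Sum>j\<in>UNIV. \<bar>K r $ i $ j * v $ j\<bar>)" by (rule sum_abs)
    also have "\<dots> \<le> (\<Sum>j\<in>UNIV. \<bar>K r $ i $ j\<bar> * norm v)"
      by (intro sum_mono) (auto simp: abs_mult intro!: mult_left_mono component_le_norm_cart)
    finally show "\<bar>(K r *v v) $ i\<bar> \<le> (\<Sum>j\<in>UNIV. \<bar>K r $ i $ j\<bar> * norm v)" .
  qed
  also have "\<dots> = kap K r * norm v" by (simp add: kap_def sum_distrib_right)
  finally show ?thesis .
qed

lemma kap_ai: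
  assumes K: "\<And>i j. (\<lambda>t. K t $ i $ j) absolutely_integrable_on {0..1}"
  shows "kap K absolutely_integrable_on {0..1}"
proof -
  have "(\<lambda>t. \<bar>K t $ i $ j\<bar>) absolutely_integrable_on {0..1}" for i j
    using absolutely_integrable_norm[OF K[of i j]] by (simp add: o_def)
  then show ?thesis unfolding kap_def
    by (intro absolutely_integrable_sum) auto
qed

lemma Kv_ai:
  fixes K :: "real \<Rightarrow> real^'n^'n"
  assumes K: "\<And>i j. (\<lambda>t. K t $ i $ j) absolutely_integrable_on {0..1}"
    and x: "continuous_on {a..b} x" and ab: "0 \<le> a" "b \<le> 1"
  shows "(\<lambda>r. K r *v x r) absolutely_integrable_on {a..b}"
proof -
  have Kab: "(\<lambda>t. K t $ i $ j) absolutely_integrable_on {a..b}" for i j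
    using absolutely_integrable_on_subinterval[OF K] ab by auto
  have xj: "continuous_on {a..b} (\<lambda>r. x r $ j)" for j
    using x by (intro continuous_intros)
  have "(\<lambda>r. \<Sum>j\<in>UNIV. K r $ i $ j * x r $ j) absolutely_integrable_on {a..b}" for i
    using cont_bounded_product_ai[OF Kab xj]
    by (intro absolutely_integrable_sum) (auto simp: mult.commute)
  then show ?thesis
    by (subst absolutely_integrable_on_iff_component) (auto simp: matrix_vector_mult_def)
qed


lemma piece:
  fixes K :: "real \<Rightarrow> real^'n^'n" and g :: "real \<Rightarrow> real^'n"
  assumes K: "\<And>i j. (\<lambda>t. K t $ i $ j) absolutely_integrable_on {0..1}"
    and ab: "0 \<le> a" "a \<le> b" "b \<le> 1" and small: "integral {a..b} (kap K) \<le> 1/2"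
    and g: "continuous_on {a..b} g"
  shows "\<exists>y. continuous_on {a..b} y \<and> (\<forall>s\<in>{a..b}. y s = g s + integral {a..s} (\<lambda>r. K r *v y r))"
proof -
  define \<Phi> where "\<Phi> y s = g s + integral {a..s} (\<lambda>r. K r *v y r)" for y :: "real \<Rightarrow> real^'n" and s
  have cI: "continuous_on {a..b} (\<Phi> y)" if "continuous_on {a..b} y" for y
    unfolding \<Phi>_def
    using g indefinite_integral_continuous_1[OF ai_int[OF Kv_ai[OF K that ab(1) ab(3)]]] 
    by (intro continuous_intros)
  have ex: "\<exists>h::(real \<Rightarrow>\<^sub>C (real^'n)). \<forall>x. apply_bcontfun h x = \<Phi> y (clamp a b x)" if "continuous_on {a..b} y" for y
    using continuous_on_cbox_bcontfunE[of a b "\<Phi> y"] cI[OF that] by (metis cbox_interval)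
  define T where "T y = (SOME h::(real \<Rightarrow>\<^sub>C (real^'n)). \<forall>x. apply_bcontfun h x = \<Phi> (apply_bcontfun y) (clamp a b x))" for y
  have Tapp: "apply_bcontfun (T y) x = \<Phi> (apply_bcontfun y) (clamp a b x)" for y x
    unfolding T_def using someI_ex[OF ex[of "apply_bcontfun y"]] by auto
  have cl: "clamp a b x \<in> {a..b}" for x :: real
    using clamp_in_interval[of a b x] ab by (auto simp: cbox_interval)
  have kapi: "kap K integrable_on {a..b}"
    using ai_int[OF absolutely_integrable_on_subinterval[OF kap_ai[OF K]]] ab by auto
  have contr: "dist (T y) (T z) \<le> 1/2 * dist y z" for y z
  proof (rule dist_bound)
    fix x
    define c where "c = clamp a b x"
    have c: "c \<in> {a..b}" using cl c_def by auto
    have yi: "(\<lambda>r. K r *v apply_bcontfun y r) integrable_on {a..c}" for y :: "real \<Rightarrow>\<^sub>C (real^'n)"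
      using ai_int[OF Kv_ai[OF K _ ab(1), of c "apply_bcontfun y"]] c ab by auto
    have ki: "kap K integrable_on {a..c}"
      using ai_int[OF absolutely_integrable_on_subinterval[OF kap_ai[OF K]]] ab c by auto
    have "dist (T y x) (T z x) = norm (integral {a..c} (\<lambda>r. K r *v (apply_bcontfun y r - apply_bcontfun z r)))"
      by (simp add: Tapp \<Phi>_def c_def[symmetric] dist_norm integral_diff[OF yi yi] matrix_vector_mult_diff_distrib)
    also have "\<dots> \<le> integral {a..c} (\<lambda>r. kap K r * dist y z)"
    proof (rule integral_norm_bound_integral)
      show "(\<lambda>r. K r *v (apply_bcontfun y r - apply_bcontfun z r)) integrable_on {a..c}"
        using integrable_diff[OF yi yi] by (simp add: matrix_vector_mult_diff_distrib)
      show "(\<lambda>r. kap K r * dist y z) integrable_on {a..c}" using ki by (rule integrable_on_mult_left)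
      fix r
      have "norm (K r *v (apply_bcontfun y r - apply_bcontfun z r)) \<le> kap K r * norm (apply_bcontfun y r - apply_bcontfun z r)"
        by (rule Kv_bound)
      also have "\<dots> \<le> kap K r * dist y z"
        using dist_bounded[of y r z] by (intro mult_left_mono kap_nonneg) (simp_all add: dist_norm)
      finally show "norm (K r *v (apply_bcontfun y r - apply_bcontfun z r)) \<le> kap K r * dist y z" .
    qed
    also have "\<dots> = integral {a..c} (kap K) * dist y z" by simp
    also have "\<dots> \<le> integral {a..b} (kap K) * dist y z"
      by (intro mult_right_mono integral_subset_le ki kapi) (use c in \<open>auto simp: kap_nonneg\<close>)
    also have "\<dots> \<le> 1/2 * dist y z" by (intro mult_right_mono small) simp
    finally show "dist (T y x) (T z x) \<le> 1/2 * dist y z" .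
  qed
  obtain y where y: "T y = y" using banach_fix_type[of "1/2" T] contr by auto
  show ?thesis
  proof (intro exI[of _ "apply_bcontfun y"] conjI ballI)
    show "continuous_on {a..b} (apply_bcontfun y)" by simp
    fix s assume s: "s \<in> {a..b}"
    have "apply_bcontfun y s = apply_bcontfun (T y) s" using y by simp
    also have "\<dots> = \<Phi> (apply_bcontfun y) s" using s by (simp add: Tapp clamp_cancel_cbox cbox_interval)
    finally show "apply_bcontfun y s = g s + integral {a..s} (\<lambda>r. K r *v apply_bcontfun y r)"
      by (simp add: \<Phi>_def)
  qed
qed


lemma step_ext:
  fixes K :: "real \<Rightarrow> real^'n^'n" and g :: "real \<Rightarrow> real^'n"
  assumes K: "\<And>i j. (\<lambda>t. K t $ i $ j) absolutely_integrable_on {0..1}"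
    and cd: "0 \<le> c" "c \<le> d" "d \<le> 1" and small: "integral {c..d} (kap K) \<le> 1/2"
    and g: "continuous_on {0..1} g"
    and x: "continuous_on {0..c} x" "\<forall>s\<in>{0..c}. x s = g s + integral {0..s} (\<lambda>r. K r *v x r)"
  shows "\<exists>z. continuous_on {0..d} z \<and> (\<forall>s\<in>{0..d}. z s = g s + integral {0..s} (\<lambda>r. K r *v z r))"
proof -
  define g' where "g' s = g s + integral {0..c} (\<lambda>r. K r *v x r)" for s
  have g': "continuous_on {c..d} g'" unfolding g'_def
    using continuous_on_subset[OF g, of "{c..d}"] cd by (auto intro!: continuous_intros)
  obtain y where y: "continuous_on {c..d} y" "\<forall>s\<in>{c..d}. y s = g' s + integral {c..s} (\<lambda>r. K r *v y r)"
    using piece[OF K cd small g'] by blast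
  have yc: "y c = x c" using y(2) x(2) cd by (auto simp: g'_def)
  define z where "z s = (if s \<le> c then x s else y s)" for s
  have zx: "continuous_on {0..c} z" using x(1) by (rule continuous_on_eq) (auto simp: z_def)
  have zy: "continuous_on {c..d} z" using y(1) by (rule continuous_on_eq) (auto simp: z_def yc)
  have zc: "continuous_on {0..d} z"
  proof -
    have "{0..d} = {0..c} \<union> {c..d}" using cd by auto
    then show ?thesis using continuous_on_closed_Un[OF closed_atLeastAtMost closed_atLeastAtMost zx zy] by simp
  qed
  show ?thesis
  proof (intro exI[of _ z] conjI ballI zc)
    fix s assume s: "s \<in> {0..d}"
    show "z s = g s + integral {0..s} (\<lambda>r. K r *v z r)"
    proof (cases "s \<le> c")
      case True
      have "integral {0..s} (\<lambda>r. K r *v z r) = integral {0..s} (\<lambda>r. K r *v x r)"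
        using True by (intro integral_cong) (auto simp: z_def)
      then show ?thesis using x(2) s True by (auto simp: z_def)
    next
      case False
      have zs: "continuous_on {0..s} z" using continuous_on_subset[OF zc] s by auto
      have iz: "(\<lambda>r. K r *v z r) integrable_on {0..s}"
        using ai_int[OF Kv_ai[OF K zs]] s cd by auto
      have "integral {0..s} (\<lambda>r. K r *v z r) = integral {0..c} (\<lambda>r. K r *v z r) + integral {c..s} (\<lambda>r. K r *v z r)"
        using Henstock_Kurzweil_Integration.integral_combine[of 0 c s "\<lambda>r. K r *v z r"] cd False iz by auto
      also have "integral {0..c} (\<lambda>r. K r *v z r) = integral {0..c} (\<lambda>r. K r *v x r)"
        by (intro integral_cong) (auto simp: z_def)
      also have "integral {c..s} (\<lambda>r. K r *v z r) = integral {c..s} (\<lambda>r. K r *v y r)"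
        by (intro integral_cong) (auto simp: z_def yc)
      finally show ?thesis using y(2) s False by (auto simp: z_def g'_def)
    qed
  qed
qed

lemma exist_sol:
  fixes K :: "real \<Rightarrow> real^'n^'n" and g :: "real \<Rightarrow> real^'n"
  assumes K: "\<And>i j. (\<lambda>t. K t $ i $ j) absolutely_integrable_on {0..1}"
    and g: "continuous_on {0..1} g"
  shows "\<exists>x. continuous_on {0..1} x \<and> (\<forall>s\<in>{0..1}. x s = g s + integral {0..s} (\<lambda>r. K r *v x r))"
proof -
  define \<alpha> where "\<alpha> s = integral {0..s} (kap K)" for s
  have ka: "kap K integrable_on {0..1}" using ai_int[OF kap_ai[OF K]] .
  have "continuous_on {0..1} \<alpha>" unfolding \<alpha>_def by (rule indefinite_integral_continuous_1[OF ka])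
  then have "uniformly_continuous_on {0..1} \<alpha>" by (rule compact_uniformly_continuous) simp
  then obtain \<delta> where \<delta>: "\<delta> > 0" "\<And>s t. s \<in> {0..1} \<Longrightarrow> t \<in> {0..1} \<Longrightarrow> dist t s < \<delta> \<Longrightarrow> dist (\<alpha> t) (\<alpha> s) < 1/2"
    unfolding uniformly_continuous_on_def by (metis half_gt_zero_iff zero_less_one)
  define P where "P c \<longleftrightarrow> (\<exists>x. continuous_on {0..c} x \<and> (\<forall>s\<in>{0..c}. x s = g s + integral {0..s} (\<lambda>r. K r *v x r)))" for c
  define cc where "cc k = min 1 (real k * \<delta> / 2)" for k
  have "P (cc k)" for k
  proof (induction k)
    case 0
    show ?case unfolding P_def cc_def
      by (intro exI[of _ g]) auto
  next
    case (Suc k)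
    have c0: "0 \<le> cc k" "cc k \<le> cc (Suc k)" "cc (Suc k) \<le> 1"
      unfolding cc_def using \<delta>(1) by (auto simp: min_def field_simps)
    have "cc (Suc k) - cc k \<le> \<delta>/2" unfolding cc_def using \<delta>(1) by (auto simp: min_def field_simps)
    then have "dist (\<alpha> (cc (Suc k))) (\<alpha> (cc k)) < 1/2"
      using c0 \<delta> by (intro \<delta>(2)) (auto simp: dist_real_def)
    moreover have "\<alpha> (cc (Suc k)) = \<alpha> (cc k) + integral {cc k..cc (Suc k)} (kap K)"
      unfolding \<alpha>_def using c0
      by (intro Henstock_Kurzweil_Integration.integral_combine[symmetric]) (auto intro: integrable_on_subinterval[OF ka])
    ultimately have sm: "integral {cc k..cc (Suc k)} (kap K) \<le> 1/2" by (simp add: dist_real_def)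
    from Suc obtain x where "continuous_on {0..cc k} x" "\<forall>s\<in>{0..cc k}. x s = g s + integral {0..s} (\<lambda>r. K r *v x r)"
      unfolding P_def by blast
    from step_ext[OF K c0 sm g this] show ?case unfolding P_def .
  qed
  moreover obtain k where "1 \<le> real k * \<delta> / 2"
    using reals_Archimedean3[of "\<delta>/2"] \<delta>(1) by (metis half_gt_zero less_eq_real_def mult.commute times_divide_eq_right)
  ultimately have "P 1" unfolding cc_def by (metis min.absorb1)
  then show ?thesis unfolding P_def .
qed


lemma flip_img: "(\<lambda>x::real. (1 / -1) *\<^sub>R x + - ((1 / -1) *\<^sub>R 1)) ` cbox a b = {1-b..1-a}"
proof -
  have "(\<lambda>x::real. (1 / -1) *\<^sub>R x + - ((1 / -1) *\<^sub>R 1)) = (\<lambda>x. 1 - x)" by auto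
  moreover have "(\<lambda>x::real. 1 - x) ` {a..b} = {1-b..1-a}"
  proof
    show "(\<lambda>x::real. 1 - x) ` {a..b} \<subseteq> {1-b..1-a}" by auto
    show "{1-b..1-a} \<subseteq> (\<lambda>x::real. 1 - x) ` {a..b}"
    proof
      fix y assume "y \<in> {1-b..1-a}"
      then show "y \<in> (\<lambda>x::real. 1 - x) ` {a..b}" by (intro image_eqI[of _ _ "1 - y"]) auto
    qed
  qed
  ultimately show ?thesis by (simp add: cbox_interval)
qed

lemma has_integral_flip:
  fixes f :: "real \<Rightarrow> 'b::real_normed_vector"
  assumes "(f has_integral i) {a..b}"
  shows "((\<lambda>x. f (1 - x)) has_integral i) {1-b..1-a}"
proof -
  have "(f has_integral i) (cbox a b)" using assms by (simp add: cbox_interval)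
  from has_integral_affinity[OF this, of "-1" 1] show ?thesis
    by (simp add: flip_img[simplified])
qed

lemma integrable_flip:
  fixes f :: "real \<Rightarrow> 'b::real_normed_vector"
  shows "f integrable_on {a..b} \<Longrightarrow> (\<lambda>x. f (1 - x)) integrable_on {1-b..1-a}"
  using has_integral_flip unfolding integrable_on_def by blast

lemma integral_flip:
  fixes f :: "real \<Rightarrow> 'b::real_normed_vector"
  shows "f integrable_on {a..b} \<Longrightarrow> integral {1-b..1-a} (\<lambda>x. f (1 - x)) = integral {a..b} f"
  using has_integral_flip[OF integrable_integral] by (rule integral_unique)

lemma adjoint_exists:
  fixes A :: "real \<Rightarrow> real^'n^'n" and e :: "real^'n"
  assumes A: "\<And>i j. (\<lambda>t. A t $ i $ j) absolutely_integrable_on {0..1}"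
  shows "\<exists>p. continuous_on {0..1} p \<and> (\<lambda>r. transpose (A r) *v p r) absolutely_integrable_on {0..1}
          \<and> (\<forall>s\<in>{0..1}. p s = e + integral {s..1} (\<lambda>r. transpose (A r) *v p r))"
proof -
  define K where "K v = transpose (A (1 - v))" for v
  have K: "(\<lambda>t. K t $ i $ j) absolutely_integrable_on {0..1}" for i j
  proof (rule abs_absolutely_integrableI_1)
    have "(\<lambda>t. A t $ j $ i) integrable_on {0..1}" using ai_int[OF A] .
    from integrable_flip[OF this] show "(\<lambda>t. K t $ i $ j) integrable_on {0..1}"
      by (simp add: K_def transpose_def)
    have "(\<lambda>t. \<bar>A t $ j $ i\<bar>) integrable_on {0..1}"
      using absolutely_integrable_norm[OF A[of j i]] ai_int by (fastforce simp: o_def)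
    from integrable_flip[OF this] show "(\<lambda>t. \<bar>K t $ i $ j\<bar>) integrable_on {0..1}"
      by (simp add: K_def transpose_def)
  qed
  obtain q where q: "continuous_on {0..1} q" "\<forall>s\<in>{0..1}. q s = e + integral {0..s} (\<lambda>r. K r *v q r)"
    using exist_sol[OF K, of "\<lambda>_. e"] by auto
  define p where "p s = q (1 - s)" for s
  have pc: "continuous_on {0..1} p" unfolding p_def
    by (rule continuous_on_compose2[OF q(1)]) (auto intro!: continuous_intros)
  have AT: "(\<lambda>t. transpose (A t) $ i $ j) absolutely_integrable_on {0..1}" for i j
    using A by (simp add: transpose_def)
  have hai: "(\<lambda>r. transpose (A r) *v p r) absolutely_integrable_on {0..1}"
    using Kv_ai[OF AT pc] by simp
  show ?thesis
  proof (intro exI[of _ p] conjI ballI pc hai)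
    fix s :: real assume s: "s \<in> {0..1}"
    have hi: "(\<lambda>r. transpose (A r) *v p r) integrable_on {s..1}"
      using ai_int[OF absolutely_integrable_on_subinterval[OF hai]] s by auto
    have "p s = e + integral {0..1-s} (\<lambda>r. K r *v q r)" using q(2) s by (auto simp: p_def)
    also have "integral {0..1-s} (\<lambda>r. K r *v q r) = integral {1-1..1-s} (\<lambda>r. transpose (A (1 - r)) *v p (1 - r))"
      by (simp add: K_def p_def)
    also have "\<dots> = integral {s..1} (\<lambda>r. transpose (A r) *v p r)"
      by (rule integral_flip[OF hi])
    finally show "p s = e + integral {s..1} (\<lambda>r. transpose (A r) *v p r)" .
  qed
qed


lemma mv_inner: "(A *v x) \<bullet> p = x \<bullet> (transpose A *v p)" for A :: "real^'n^'m"
  by (simp add: inner_vec_def matrix_vector_mult_def transpose_def sum_distrib_left sum_distrib_right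
      mult.assoc mult.left_commute) (rule sum.swap)

lemma inner_ai:
  fixes Y p :: "real \<Rightarrow> real^'n"
  assumes Y: "Y absolutely_integrable_on {a..b}" and p: "continuous_on {a..b} p"
  shows "(\<lambda>s. Y s \<bullet> p s) absolutely_integrable_on {a..b}"
proof -
  have "(\<lambda>s. p s $ k * Y s $ k) absolutely_integrable_on {a..b}" for k
    by (rule cont_bounded_product_ai[OF ai_comp[OF Y]]) (use p in \<open>intro continuous_intros\<close>)
  then show ?thesis unfolding inner_vec_def
    by (intro absolutely_integrable_sum) (auto simp: mult.commute)
qed

lemma repr:
  fixes A :: "real \<Rightarrow> real^'n^'n" and x p h :: "real \<Rightarrow> real^'n" and e x0 :: "real^'n"
  assumes A: "\<And>i j. (\<lambda>t. A t $ i $ j) absolutely_integrable_on {0..1}"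
    and Yai: "(\<lambda>r. A r *v x r + h r) absolutely_integrable_on {0..1}"
    and xs: "\<forall>s\<in>{0..1}. x s = x0 + integral {0..s} (\<lambda>r. A r *v x r + h r)"
    and pc: "continuous_on {0..1} p"
    and Pai: "(\<lambda>r. transpose (A r) *v p r) absolutely_integrable_on {0..1}"
    and ps: "\<forall>s\<in>{0..1}. p s = e + integral {s..1} (\<lambda>r. transpose (A r) *v p r)"
  shows "x 1 \<bullet> e = x0 \<bullet> p 0 + integral {0..1} (\<lambda>s. h s \<bullet> p s)"
proof -
  define Y where "Y = (\<lambda>r. A r *v x r + h r)"
  define P where "P = (\<lambda>r. transpose (A r) *v p r)"
  have Yai': "Y absolutely_integrable_on {0..1}" using Yai by (simp add: Y_def)
  have Pai': "P absolutely_integrable_on {0..1}" using Pai by (simp add: P_def)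
  have xc: "continuous_on {0..1} x"
  proof -
    have "continuous_on {0..1} (\<lambda>s. x0 + integral {0..s} Y)"
      using indefinite_integral_continuous_1[OF ai_int[OF Yai']] by (intro continuous_intros)
    then show ?thesis by (rule continuous_on_eq) (use xs in \<open>auto simp: Y_def\<close>)
  qed
  have D: "integral {0..1} (\<lambda>s. Y s \<bullet> (e + integral {s..1} P)) =
         integral {0..1} Y \<bullet> e + integral {0..1} (\<lambda>s. integral {0..s} Y \<bullet> P s)"
    by (rule duality[OF Yai' Pai'])
  have "integral {0..1} (\<lambda>s. Y s \<bullet> (e + integral {s..1} P)) = integral {0..1} (\<lambda>s. Y s \<bullet> p s)"
    by (intro integral_cong) (use ps in \<open>auto simp: P_def\<close>)
  moreover have "integral {0..1} Y = x 1 - x0" using xs by (auto simp: Y_def)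
  moreover have "integral {0..1} (\<lambda>s. integral {0..s} Y \<bullet> P s) = integral {0..1} (\<lambda>s. (x s - x0) \<bullet> P s)"
    by (intro integral_cong) (use xs in \<open>auto simp: Y_def\<close>)
  ultimately have E: "integral {0..1} (\<lambda>s. Y s \<bullet> p s) = (x 1 - x0) \<bullet> e + integral {0..1} (\<lambda>s. (x s - x0) \<bullet> P s)"
    using D by simp
  have i1: "(\<lambda>s. x s \<bullet> P s) integrable_on {0..1}"
    using ai_int[OF inner_ai[OF Pai' xc]] by (simp add: inner_commute)
  have i2: "(\<lambda>s. h s \<bullet> p s) integrable_on {0..1}"
  proof -
    have hai: "h absolutely_integrable_on {0..1}"
    proof -
      have "(\<lambda>r. Y r - A r *v x r) absolutely_integrable_on {0..1}"
        using Yai' Kv_ai[OF A xc] by (intro set_integral_diff) auto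
      then show ?thesis by (simp add: Y_def)
    qed
    from ai_int[OF inner_ai[OF hai pc]] show ?thesis .
  qed
  have iP: "P integrable_on {0..1}" using ai_int[OF Pai'] .
  have "integral {0..1} (\<lambda>s. Y s \<bullet> p s) = integral {0..1} (\<lambda>s. x s \<bullet> P s + h s \<bullet> p s)"
    by (intro integral_cong) (auto simp: Y_def P_def inner_add_left mv_inner)
  also have "\<dots> = integral {0..1} (\<lambda>s. x s \<bullet> P s) + integral {0..1} (\<lambda>s. h s \<bullet> p s)"
    by (rule integral_add[OF i1 i2])
  finally have E1: "integral {0..1} (\<lambda>s. Y s \<bullet> p s) = integral {0..1} (\<lambda>s. x s \<bullet> P s) + integral {0..1} (\<lambda>s. h s \<bullet> p s)" .
  have "integral {0..1} (\<lambda>s. (x s - x0) \<bullet> P s) = integral {0..1} (\<lambda>s. x s \<bullet> P s - x0 \<bullet> P s)"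
    by (simp add: inner_diff_left)
  also have "\<dots> = integral {0..1} (\<lambda>s. x s \<bullet> P s) - integral {0..1} (\<lambda>s. x0 \<bullet> P s)"
    by (rule integral_diff[OF i1]) (use integrable_linear[OF iP bounded_linear_inner_right[of x0]] in \<open>simp add: o_def\<close>)
  also have "integral {0..1} (\<lambda>s. x0 \<bullet> P s) = x0 \<bullet> integral {0..1} P"
    using integral_linear[OF iP bounded_linear_inner_right[of x0]] by (simp add: o_def)
  also have "integral {0..1} P = p 0 - e" using ps by (auto simp: P_def)
  finally have E2: "integral {0..1} (\<lambda>s. (x s - x0) \<bullet> P s) = integral {0..1} (\<lambda>s. x s \<bullet> P s) - x0 \<bullet> (p 0 - e)" .
  from E E1 E2 show ?thesis by (simp add: inner_diff_left inner_diff_right)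
qed


definition L2r :: "(real \<Rightarrow> real) \<Rightarrow> bool" where
  "L2r a \<longleftrightarrow> a \<in> borel_measurable (lebesgue_on {0..1}) \<and> (\<lambda>s. (a s)\<^sup>2) integrable_on {0..1}"

lemma L2r_iff: "L2_01 a \<longleftrightarrow> L2r a"
  by (simp add: L2_01_def L2r_def measurable_on_iff_borel_measurable)

lemma mid01: "(\<lambda>s::real. s) \<in> borel_measurable (lebesgue_on S)" if "S \<in> sets lebesgue"
  using continuous_imp_measurable_on_sets_lebesgue[OF continuous_on_id that] by (simp add: id_def)

lemma L2r_prod_ai:
  assumes "L2r a" "L2r b"
  shows "(\<lambda>s. a s * b s) absolutely_integrable_on {0..1}"
proof (rule measurable_bounded_by_integrable_imp_absolutely_integrable)
  show "(\<lambda>s. a s * b s) \<in> borel_measurable (lebesgue_on {0..1})"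
    using assms unfolding L2r_def by (intro borel_measurable_times) auto
  have "(\<lambda>s. (a s)\<^sup>2) integrable_on {0..1}" "(\<lambda>s. (b s)\<^sup>2) integrable_on {0..1}"
    using assms unfolding L2r_def by auto
  from integrable_add[OF integrable_on_cmult_left[OF this(1), of "1/2"] integrable_on_cmult_left[OF this(2), of "1/2"]]
  show "(\<lambda>s. (a s)\<^sup>2 / 2 + (b s)\<^sup>2 / 2) integrable_on {0..1}" by simp
  fix s
  have "2 * \<bar>a s\<bar> * \<bar>b s\<bar> \<le> (a s)\<^sup>2 + (b s)\<^sup>2"
    using sum_squares_bound[of "\<bar>a s\<bar>" "\<bar>b s\<bar>"] by (simp add: power2_abs)
  then show "norm (a s * b s) \<le> (a s)\<^sup>2 / 2 + (b s)\<^sup>2 / 2" by (simp add: abs_mult)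
qed auto

lemma L2r_add:
  assumes "L2r a" "L2r b"
  shows "L2r (\<lambda>s. a s + b s)"
  unfolding L2r_def
proof
  show "(\<lambda>s. a s + b s) \<in> borel_measurable (lebesgue_on {0..1})"
    using assms unfolding L2r_def by (intro borel_measurable_add) auto
  show "(\<lambda>s. (a s + b s)\<^sup>2) integrable_on {0..1}"
  proof (rule measurable_bounded_by_integrable_imp_integrable)
    show "(\<lambda>s. (a s + b s)\<^sup>2) \<in> borel_measurable (lebesgue_on {0..1})"
      using assms unfolding L2r_def by (intro borel_measurable_power borel_measurable_add) auto
    have "(\<lambda>s. (a s)\<^sup>2) integrable_on {0..1}" "(\<lambda>s. (b s)\<^sup>2) integrable_on {0..1}"
      using assms unfolding L2r_def by auto
    from integrable_add[OF integrable_on_cmult_left[OF this(1), of 2] integrable_on_cmult_left[OF this(2), of 2]]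
    show "(\<lambda>s. 2 * (a s)\<^sup>2 + 2 * (b s)\<^sup>2) integrable_on {0..1}" by simp
    fix s
    have "(a s + b s)\<^sup>2 \<le> 2 * (a s)\<^sup>2 + 2 * (b s)\<^sup>2"
      using sum_squares_bound[of "a s" "b s"] by (simp add: power2_sum)
    then show "norm ((a s + b s)\<^sup>2) \<le> 2 * (a s)\<^sup>2 + 2 * (b s)\<^sup>2" by simp
  qed auto
qed

lemma L2r_zero: "L2r (\<lambda>s. 0)"
  unfolding L2r_def by auto

lemma L2r_sum:
  assumes "finite I" "\<And>i. i \<in> I \<Longrightarrow> L2r (a i)"
  shows "L2r (\<lambda>s. \<Sum>i\<in>I. a i s)"
  using assms by (induction I rule: finite_induct) (auto intro: L2r_add L2r_zero)

lemma L2r_mult_bdd: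
  assumes a: "L2r a" and c: "c \<in> borel_measurable (lebesgue_on {0..1})" and C: "\<And>s. s \<in> {0..1} \<Longrightarrow> \<bar>c s\<bar> \<le> C"
  shows "L2r (\<lambda>s. c s * a s)"
  unfolding L2r_def
proof
  show "(\<lambda>s. c s * a s) \<in> borel_measurable (lebesgue_on {0..1})"
    using assms unfolding L2r_def by (intro borel_measurable_times) auto
  show "(\<lambda>s. (c s * a s)\<^sup>2) integrable_on {0..1}"
  proof (rule measurable_bounded_by_integrable_imp_integrable)
    show "(\<lambda>s. (c s * a s)\<^sup>2) \<in> borel_measurable (lebesgue_on {0..1})"
      using assms unfolding L2r_def by (intro borel_measurable_power borel_measurable_times) auto
    have "(\<lambda>s. (a s)\<^sup>2) integrable_on {0..1}" using assms unfolding L2r_def by auto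
    from integrable_on_cmult_left[OF this, of "C\<^sup>2"]
    show "(\<lambda>s. C\<^sup>2 * (a s)\<^sup>2) integrable_on {0..1}" by simp
    fix s :: real assume s: "s \<in> {0..1}"
    have "(c s)\<^sup>2 \<le> C\<^sup>2" using C[OF s] by (metis abs_ge_zero power2_abs power_mono)
    then have "(c s)\<^sup>2 * (a s)\<^sup>2 \<le> C\<^sup>2 * (a s)\<^sup>2" by (rule mult_right_mono) simp
    then show "norm ((c s * a s)\<^sup>2) \<le> C\<^sup>2 * (a s)\<^sup>2" by (simp add: power_mult_distrib)
  qed auto
qed

lemma L2_comp:
  fixes u :: "real \<Rightarrow> real^'m"
  assumes "L2_01 u" shows "L2r (\<lambda>s. u s $ l)"
proof -
  have m: "u \<in> borel_measurable (lebesgue_on {0..1})" and i: "(\<lambda>s. (norm (u s))\<^sup>2) integrable_on {0..1}"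
    using assms by (auto simp: L2_01_def measurable_on_iff_borel_measurable)
  show ?thesis unfolding L2r_def
  proof
    show mm: "(\<lambda>s. u s $ l) \<in> borel_measurable (lebesgue_on {0..1})"
      using measurable_compose[OF m borel_measurable_nth] .
    show "(\<lambda>s. (u s $ l)\<^sup>2) integrable_on {0..1}"
    proof (rule measurable_bounded_by_integrable_imp_integrable[OF _ i])
      show "(\<lambda>s. (u s $ l)\<^sup>2) \<in> borel_measurable (lebesgue_on {0..1})"
        using mm by (intro borel_measurable_power)
      fix s
      have "\<bar>u s $ l\<bar> \<le> norm (u s)" by (rule component_le_norm_cart)
      then show "norm ((u s $ l)\<^sup>2) \<le> (norm (u s))\<^sup>2"
        by (simp add: power_mono[of "\<bar>u s $ l\<bar>" "norm (u s)" 2, simplified])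
    qed auto
  qed
qed

lemma L2_of_comp:
  fixes g :: "real \<Rightarrow> real^'m"
  assumes "\<And>l. L2r (\<lambda>s. g s $ l)" shows "L2_01 g"
proof -
  have m: "(\<lambda>s. g s $ l) \<in> borel_measurable (lebesgue_on {0..1})" for l using assms by (auto simp: L2r_def)
  have "g \<in> borel_measurable (lebesgue_on {0..1})"
  proof (subst borel_measurable_euclidean_space, intro ballI)
    fix b :: "real^'m" assume "b \<in> Basis"
    then obtain l where "b = axis l 1" by (auto simp: Basis_vec_def)
    then show "(\<lambda>x. g x \<bullet> b) \<in> borel_measurable (lebesgue_on {0..1})"
      using m[of l] by (simp add: inner_axis)
  qed
  moreover have "(\<lambda>s. (norm (g s))\<^sup>2) integrable_on {0..1}"
  proof -
    have "(\<lambda>s. \<Sum>l\<in>UNIV. (g s $ l)\<^sup>2) integrable_on {0..1}"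
      using assms by (intro integrable_sum) (auto simp: L2r_def)
    moreover have "(norm (g s))\<^sup>2 = (\<Sum>l\<in>UNIV. (g s $ l)\<^sup>2)" for s
      unfolding power2_norm_eq_inner by (simp add: inner_vec_def power2_eq_square)
    ultimately show ?thesis by simp
  qed
  ultimately show ?thesis by (simp add: L2_01_def measurable_on_iff_borel_measurable)
qed

lemma L2_inner_ai:
  fixes u g :: "real \<Rightarrow> real^'m"
  assumes "L2_01 u" "L2_01 g"
  shows "(\<lambda>s. u s \<bullet> g s) absolutely_integrable_on {0..1}"
  unfolding inner_vec_def
  using L2r_prod_ai[OF L2_comp[OF assms(1)] L2_comp[OF assms(2)]]
  by (intro absolutely_integrable_sum) auto


lemma usc_prob:
  fixes M :: "'a measure" and \<xi> :: "nat \<Rightarrow> 'a \<Rightarrow> real" and a :: "real^'n" and w :: "nat \<Rightarrow> real^'n"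
  assumes P: "prob_space M" and xm: "\<And>i. i \<in> I \<Longrightarrow> \<xi> i \<in> borel_measurable M" and I: "finite I"
    and Qb: "Q \<in> sets borel" and Qc: "closed Q"
    and lt: "measure M {\<omega> \<in> space M. a + (\<Sum>i\<in>I. \<xi> i \<omega> *\<^sub>R w i) \<in> Q} < c"
  shows "\<exists>\<epsilon>>0. \<forall>w'. (\<forall>i\<in>I. \<forall>k. \<bar>w' i $ k - w i $ k\<bar> < \<epsilon>) \<longrightarrow>
            measure M {\<omega> \<in> space M. a + (\<Sum>i\<in>I. \<xi> i \<omega> *\<^sub>R w' i) \<in> Q} < c"
proof (rule ccontr)
  interpret prob_space M by (rule P)
  define E where "E w = {\<omega> \<in> space M. a + (\<Sum>i\<in>I. \<xi> i \<omega> *\<^sub>R w i) \<in> Q}" for w :: "nat \<Rightarrow> real^'n"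
  have Em: "E w \<in> sets M" for w
  proof -
    have "(\<lambda>\<omega>. a + (\<Sum>i\<in>I. \<xi> i \<omega> *\<^sub>R w i)) \<in> borel_measurable M"
      by (intro borel_measurable_add borel_measurable_const borel_measurable_sum borel_measurable_scaleR xm)
    from measurable_sets[OF this Qb] show ?thesis
      unfolding E_def by (simp add: vimage_def Int_def conj_commute)
  qed
  assume "\<not> ?thesis"
  note nt = this
  have H: "\<exists>w'. (\<forall>i\<in>I. \<forall>k. \<bar>w' i $ k - w i $ k\<bar> < \<epsilon>) \<and> c \<le> measure M (E w')" if "\<epsilon> > 0" for \<epsilon>
  proof -
    from nt that have "\<not> (\<forall>w'. (\<forall>i\<in>I. \<forall>k. \<bar>w' i $ k - w i $ k\<bar> < \<epsilon>) \<longrightarrow> measure M (E w') < c)"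
      unfolding E_def by blast
    then show ?thesis by (auto simp: not_less)
  qed
  have "\<forall>m::nat. \<exists>w'. (\<forall>i\<in>I. \<forall>k. \<bar>w' i $ k - w i $ k\<bar> < 1 / Suc m) \<and> c \<le> measure M (E w')"
  proof
    fix m :: nat show "\<exists>w'. (\<forall>i\<in>I. \<forall>k. \<bar>w' i $ k - w i $ k\<bar> < 1 / Suc m) \<and> c \<le> measure M (E w')"
      by (rule H) simp
  qed
  then obtain ws where ws: "\<And>m i k. i \<in> I \<Longrightarrow> \<bar>ws m i $ k - w i $ k\<bar> < 1 / Suc m" "\<And>m. c \<le> measure M (E (ws m))"
    by metis
  define F where "F m = (\<Union>j\<in>{m..}. E (ws j))" for m
  have Fm: "F m \<in> sets M" for m unfolding F_def using Em by auto
  have dec: "decseq F" unfolding F_def decseq_def by (auto intro: order_trans)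
  have cF: "c \<le> measure M (F m)" for m
  proof -
    have "measure M (E (ws m)) \<le> measure M (F m)"
      by (rule finite_measure_mono) (use Fm in \<open>auto simp: F_def\<close>)
    then show ?thesis using ws(2)[of m] by simp
  qed
  have lim: "(\<lambda>m. measure M (F m)) \<longlonglongrightarrow> measure M (\<Inter>m. F m)"
    by (rule finite_Lim_measure_decseq) (use Fm dec in auto)
  have cI: "c \<le> measure M (\<Inter>m. F m)"
    by (rule LIMSEQ_le_const[OF lim]) (use cF in auto)
  have conv: "(\<lambda>j. ws j i) \<longlonglongrightarrow> w i" if i: "i \<in> I" for i
  proof (rule vec_tendstoI)
    fix k
    have "(\<lambda>j. ws j i $ k - w i $ k) \<longlonglongrightarrow> 0"
    proof (rule Lim_null_comparison)
      show "\<forall>\<^sub>F j in sequentially. norm (ws j i $ k - w i $ k) \<le> 1 / real (Suc j)"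
        using ws(1)[OF i] by (intro always_eventually allI) (simp add: less_imp_le)
      show "(\<lambda>j. 1 / real (Suc j)) \<longlonglongrightarrow> 0" by (rule LIMSEQ_Suc[OF lim_const_over_n[of 1]])
    qed
    then show "((\<lambda>j. ws j i $ k) \<longlongrightarrow> w i $ k) sequentially"
      by (simp add: LIM_zero_iff)
  qed
  have sub: "(\<Inter>m. F m) \<subseteq> E w"
  proof
    fix \<omega> assume om: "\<omega> \<in> (\<Inter>m. F m)"
    then have sp: "\<omega> \<in> space M" using Fm sets.sets_into_space F_def E_def by auto
    have t: "(\<lambda>j. a + (\<Sum>i\<in>I. \<xi> i \<omega> *\<^sub>R ws j i)) \<longlonglongrightarrow> a + (\<Sum>i\<in>I. \<xi> i \<omega> *\<^sub>R w i)"
      by (intro tendsto_intros conv)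
    show "\<omega> \<in> E w"
    proof (rule ccontr)
      assume "\<omega> \<notin> E w"
      then have "a + (\<Sum>i\<in>I. \<xi> i \<omega> *\<^sub>R w i) \<in> - Q" using sp by (auto simp: E_def)
      from topological_tendstoD[OF t _ this] Qc
      have "\<forall>\<^sub>F j in sequentially. a + (\<Sum>i\<in>I. \<xi> i \<omega> *\<^sub>R ws j i) \<in> - Q"
        by (auto simp: open_Compl)
      then obtain m where "\<And>j. j \<ge> m \<Longrightarrow> a + (\<Sum>i\<in>I. \<xi> i \<omega> *\<^sub>R ws j i) \<notin> Q"
        by (auto simp: eventually_sequentially)
      moreover from om have "\<omega> \<in> F m" by auto
      ultimately show False by (auto simp: F_def E_def)
    qed
  qed
  have "measure M (\<Inter>m. F m) \<le> measure M (E w)"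
    by (rule finite_measure_mono[OF sub Em])
  with cI lt show False by (simp add: E_def)
qed


lemma cc_meas: "(\<lambda>s::real. if a \<le> s \<and> s < b then 1 else (0::real)) \<in> borel_measurable (lebesgue_on {0..1})"
proof -
  have "(\<lambda>s::real. if a \<le> s \<and> s < b then 1 else (0::real)) \<in> borel_measurable borel" by measurable
  from measurable_compose[OF mid01[of "{0..1}"] this] show ?thesis by simp
qed

lemma cont_comp_meas: fixes p :: "real \<Rightarrow> real^'n"
  assumes "continuous_on {0..1} p" shows "(\<lambda>s. p s $ j) \<in> borel_measurable (lebesgue_on {0..1})"
  by (rule continuous_imp_measurable_on_sets_lebesgue) (use assms in \<open>auto intro!: continuous_intros\<close>)

lemma cont_comp_bdd: fixes p :: "real \<Rightarrow> real^'n"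
  assumes "continuous_on {0..1} p" shows "\<exists>C. \<forall>s\<in>{0..1}. \<bar>p s $ j\<bar> \<le> C"
proof -
  have "bounded (p ` {0..1})" by (rule compact_imp_bounded[OF compact_continuous_image[OF assms compact_Icc]])
  then obtain C where "\<forall>y\<in>p ` {0..1}. norm y \<le> C" by (auto simp: bounded_iff)
  then show ?thesis by (metis component_le_norm_cart image_eqI order_trans)
qed

lemma weak_open: assumes "L2_01 g" "open W"
  shows "openin weak_L2_topology {u. integral {0..1} (\<lambda>s. u s \<bullet> g s) \<in> W}"
  unfolding weak_L2_topology_def
  by (rule topology_generated_by_Basis) (use assms in blast)

theorem theorem1:
  fixes M :: "'a measure" and N :: nat and tt :: "nat \<Rightarrow> real"
    and \<xi> :: "nat \<Rightarrow> 'a \<Rightarrow> real"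
    and A :: "real \<Rightarrow> real^'n^'n" and B :: "real \<Rightarrow> real^'m^'n" and f :: "real \<Rightarrow> real^'n"
    and x0 :: "real^'n" and Q :: "(real^'n) set" and V :: "(real^'m) set"
  assumes "prob_space M" and "complete_measure M"
    and "N \<ge> 1" and "tt 0 = 0" and "tt N = 1" and "\<And>i. i < N \<Longrightarrow> tt i < tt (Suc i)"
    and "\<And>i. i \<in> {1..N} \<Longrightarrow> \<xi> i \<in> borel_measurable M"
    and "\<And>i j. (\<lambda>t. A t $ i $ j) absolutely_integrable_on {0..1}"
    and "\<And>i j. (\<lambda>t. B t $ i $ j) absolutely_integrable_on {0..1}"
    and "\<And>i j. L2_01 (\<lambda>t. B t $ i $ j)"
    and "\<And>i. (\<lambda>t. f t $ i) absolutely_integrable_on {0..1}"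
    and "Q \<in> sets borel"
    and "admissible V \<noteq> {}"
    and "compactin weak_L2_topology (admissible V)"
    and "closed Q"
  shows "\<exists>u0 \<in> admissible V. \<forall>u \<in> admissible V.
           cost M N tt \<xi> A B f x0 Q u \<le> cost M N tt \<xi> A B f x0 Q u0"
proof -
  note Aai = assms(8) and BL2 = assms(10) and fai0 = assms(11)
  have "\<forall>k. \<exists>p. continuous_on {0..1} p \<and> (\<lambda>r. transpose (A r) *v p r) absolutely_integrable_on {0..1}
          \<and> (\<forall>s\<in>{0..1}. p s = axis k 1 + integral {s..1} (\<lambda>r. transpose (A r) *v p r))"
    using adjoint_exists[OF Aai] by blast
  from choice[OF this] obtain pp where pp: "\<And>k. continuous_on {0..1} (pp k)"
    "\<And>k. (\<lambda>r. transpose (A r) *v pp k r) absolutely_integrable_on {0..1}"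
    "\<And>k. \<forall>s\<in>{0..1}. pp k s = axis k 1 + integral {s..1} (\<lambda>r. transpose (A r) *v pp k r)"
    by blast
  define cc where "cc i s = (if tt (i - 1) \<le> s \<and> s < tt i then 1 else 0 :: real)" for i s
  define G where "G k i s = cc i s *\<^sub>R (transpose (B s) *v pp k s)" for k i s
  define ell where "ell k i u = integral {0..1} (\<lambda>s. u s \<bullet> G k i s)" for k i u
  define a0 where "a0 = (\<chi> k. x0 \<bullet> pp k 0 + integral {0..1} (\<lambda>s. f s \<bullet> pp k s))"
  define W where "W u i = (\<chi> k. ell k i u)" for u i
  define Z where "Z w \<omega> = a0 + (\<Sum>i\<in>{1..N}. \<xi> i \<omega> *\<^sub>R w i)" for w \<omega>
  have ccm: "cc i \<in> borel_measurable (lebesgue_on {0..1})" for i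
    unfolding cc_def[abs_def] by (rule cc_meas)
  have ccb: "\<bar>cc i s\<bar> \<le> 1" for i s by (simp add: cc_def)
  have xi_eq: "xi_proc N tt \<xi> s \<omega> = (\<Sum>i\<in>{1..N}. \<xi> i \<omega> * cc i s)" for s \<omega>
    unfolding xi_proc_def cc_def by (intro sum.cong) auto
  have fai: "f absolutely_integrable_on {0..1}"
    using fai0 by (subst absolutely_integrable_on_iff_component) auto
  have GL2: "L2_01 (G k i)" for k i
  proof (rule L2_of_comp)
    fix l
    have eq: "(\<lambda>s. G k i s $ l) = (\<lambda>s. cc i s * (\<Sum>j\<in>UNIV. pp k s $ j * B s $ j $ l))"
      by (auto simp: G_def matrix_vector_mult_def transpose_def mult.commute intro!: ext sum.cong)
    have "L2r (\<lambda>s. pp k s $ j * B s $ j $ l)" for j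
    proof -
      obtain C where "\<forall>s\<in>{0..1}. \<bar>pp k s $ j\<bar> \<le> C" using cont_comp_bdd[OF pp(1)] by blast
      then show ?thesis
        using L2r_mult_bdd[OF BL2[of j l, unfolded L2r_iff] cont_comp_meas[OF pp(1)]] by blast
    qed
    then have "L2r (\<lambda>s. \<Sum>j\<in>UNIV. pp k s $ j * B s $ j $ l)" by (intro L2r_sum) auto
    from L2r_mult_bdd[OF this ccm ccb]
    show "L2r (\<lambda>s. G k i s $ l)" unfolding eq by blast
  qed
  have TS: "terminal_state N tt \<xi> A B f x0 u \<omega> = Z (W u) \<omega>" if u: "u \<in> admissible V" for u \<omega>
  proof -
    have uL2: "L2_01 u" using u by (simp add: admissible_def)
    define h where "h r = xi_proc N tt \<xi> r \<omega> *\<^sub>R (B r *v u r) + f r" for r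
    have Buai: "(\<lambda>r. B r *v u r) absolutely_integrable_on {0..1}"
    proof (subst absolutely_integrable_on_iff_component, simp, intro allI)
      fix i
      have "(\<lambda>r. \<Sum>j\<in>UNIV. B r $ i $ j * u r $ j) absolutely_integrable_on {0..1}"
        by (intro absolutely_integrable_sum L2r_prod_ai L2_comp[OF uL2] BL2[unfolded L2r_iff]) auto
      then show "(\<lambda>r. (B r *v u r) $ i) absolutely_integrable_on {0..1}"
        by (simp add: matrix_vector_mult_def)
    qed
    have xim: "(\<lambda>r. xi_proc N tt \<xi> r \<omega>) \<in> borel_measurable (lebesgue_on {0..1})"
      unfolding xi_eq by (intro borel_measurable_sum borel_measurable_times borel_measurable_const ccm)
    have xib: "bounded ((\<lambda>r. xi_proc N tt \<xi> r \<omega>) ` {0..1})"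
    proof -
      have "\<bar>xi_proc N tt \<xi> r \<omega>\<bar> \<le> (\<Sum>i\<in>{1..N}. \<bar>\<xi> i \<omega>\<bar>)" for r
      proof -
        have "\<bar>xi_proc N tt \<xi> r \<omega>\<bar> \<le> (\<Sum>i\<in>{1..N}. \<bar>\<xi> i \<omega> * cc i r\<bar>)" unfolding xi_eq by (rule sum_abs)
        also have "\<dots> \<le> (\<Sum>i\<in>{1..N}. \<bar>\<xi> i \<omega>\<bar>)"
          by (intro sum_mono) (auto simp: abs_mult cc_def)
        finally show ?thesis .
      qed
      then show ?thesis by (auto simp: bounded_iff)
    qed
    have bil: "bilinear (\<lambda>x (y::real^'n). x *\<^sub>R y)"
      by (simp add: bilinear_conv_bounded_bilinear bounded_bilinear_scaleR)
    have hai: "h absolutely_integrable_on {0..1}"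
    proof -
      have "(\<lambda>r. xi_proc N tt \<xi> r \<omega> *\<^sub>R (B r *v u r)) absolutely_integrable_on {0..1}"
        by (rule absolutely_integrable_bounded_measurable_product[OF bil xim _ xib Buai]) simp
      then show ?thesis unfolding h_def[abs_def] using fai by (intro set_integral_add)
    qed
    have hsub: "h integrable_on {0..s}" if "s \<in> {0..1}" for s
      using ai_int[OF absolutely_integrable_on_subinterval[OF hai]] that by auto
    have gc: "continuous_on {0..1} (\<lambda>s. x0 + integral {0..s} h)"
      using indefinite_integral_continuous_1[OF ai_int[OF hai]] by (intro continuous_intros)
    obtain x where x: "continuous_on {0..1} x" "\<forall>s\<in>{0..1}. x s = (x0 + integral {0..s} h) + integral {0..s} (\<lambda>r. A r *v x r)"
      using exist_sol[OF Aai gc] by blast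
    have rhs_eq: "(\<lambda>r. A r *v y r + xi_proc N tt \<xi> r \<omega> *\<^sub>R (B r *v u r) + f r) = (\<lambda>r. A r *v y r + h r)" for y
      by (auto simp: h_def add.assoc)
    have sol: "is_solution N tt \<xi> A B f x0 u \<omega> x"
      unfolding is_solution_def Let_def rhs_eq
    proof (intro conjI ballI)
      show "(\<lambda>r. A r *v x r + h r) absolutely_integrable_on {0..1}"
        using Kv_ai[OF Aai x(1)] hai by (intro set_integral_add) auto
      fix s :: real assume s: "s \<in> {0..1}"
      have xs: "continuous_on {0..s} x" using continuous_on_subset[OF x(1)] s by auto
      have "integral {0..s} (\<lambda>r. A r *v x r + h r) = integral {0..s} (\<lambda>r. A r *v x r) + integral {0..s} h"
        by (rule integral_add[OF ai_int[OF Kv_ai[OF Aai xs]] hsub[OF s]]) (use s in auto)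
      then show "x s = x0 + integral {0..s} (\<lambda>r. A r *v x r + h r)" using x(2) s by (simp add: algebra_simps)
    qed
    have uniq: "y 1 = Z (W u) \<omega>" if ys: "is_solution N tt \<xi> A B f x0 u \<omega> y" for y
    proof -
      have Yai: "(\<lambda>r. A r *v y r + h r) absolutely_integrable_on {0..1}"
        and yeq: "\<forall>s\<in>{0..1}. y s = x0 + integral {0..s} (\<lambda>r. A r *v y r + h r)"
        using ys unfolding is_solution_def Let_def rhs_eq by auto
      show ?thesis
      proof (subst vec_eq_iff, intro allI)
        fix k
        have R: "y 1 \<bullet> axis k 1 = x0 \<bullet> pp k 0 + integral {0..1} (\<lambda>s. h s \<bullet> pp k s)"
          by (rule repr[OF Aai Yai yeq pp(1) pp(2) pp(3)])
        have fi: "(\<lambda>s. f s \<bullet> pp k s) integrable_on {0..1}" using ai_int[OF inner_ai[OF fai pp(1)]] .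
        have gi: "(\<lambda>s. u s \<bullet> G k i s) integrable_on {0..1}" for i
          using ai_int[OF L2_inner_ai[OF uL2 GL2]] .
        have pw: "h s \<bullet> pp k s = f s \<bullet> pp k s + (\<Sum>i\<in>{1..N}. \<xi> i \<omega> * (u s \<bullet> G k i s))" for s
        proof -
          have "(xi_proc N tt \<xi> s \<omega> *\<^sub>R (B s *v u s)) \<bullet> pp k s = xi_proc N tt \<xi> s \<omega> * (u s \<bullet> (transpose (B s) *v pp k s))"
            by (simp add: mv_inner)
          also have "\<dots> = (\<Sum>i\<in>{1..N}. \<xi> i \<omega> * (u s \<bullet> G k i s))"
            unfolding xi_eq G_def by (simp add: sum_distrib_right mult.assoc)
          finally show ?thesis by (simp add: h_def inner_add_left add.commute)
        qed
        have "integral {0..1} (\<lambda>s. h s \<bullet> pp k s) = integral {0..1} (\<lambda>s. f s \<bullet> pp k s) + (\<Sum>i\<in>{1..N}. \<xi> i \<omega> * ell k i u)"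
        proof -
          have si: "(\<lambda>s. \<Sum>i\<in>{1..N}. \<xi> i \<omega> * (u s \<bullet> G k i s)) integrable_on {0..1}"
            by (intro integrable_sum integrable_on_mult_right gi) auto
          have "integral {0..1} (\<lambda>s. h s \<bullet> pp k s) = integral {0..1} (\<lambda>s. f s \<bullet> pp k s) + integral {0..1} (\<lambda>s. \<Sum>i\<in>{1..N}. \<xi> i \<omega> * (u s \<bullet> G k i s))"
            unfolding pw by (rule integral_add[OF fi si])
          also have "integral {0..1} (\<lambda>s. \<Sum>i\<in>{1..N}. \<xi> i \<omega> * (u s \<bullet> G k i s)) = (\<Sum>i\<in>{1..N}. \<xi> i \<omega> * ell k i u)"
            by (subst integral_sum) (auto intro!: integrable_on_mult_right gi simp: ell_def)
          finally show ?thesis .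
        qed
        with R show "y 1 $ k = Z (W u) \<omega> $ k"
          by (simp add: inner_axis Z_def a0_def W_def sum_component algebra_simps)
      qed
    qed
    show ?thesis unfolding terminal_state_def
      by (rule the_equality) (use sol uniq in blast)+
  qed
  define S where "S = admissible V"
  define cst where "cst u = cost M N tt \<xi> A B f x0 Q u" for u
  have cst_eq: "cst u = measure M {\<omega> \<in> space M. Z (W u) \<omega> \<in> Q}" if "u \<in> S" for u
    unfolding cst_def cost_def using TS that S_def by simp
  have Oopen: "openin weak_L2_topology {u. ell k i u \<in> ball c e}" for k i c e
    unfolding ell_def by (rule weak_open[OF GL2 open_ball])
  show ?thesis
  proof (rule ccontr)
    assume neg: "\<not> ?thesis"
    then have "\<forall>v\<in>S. \<exists>u. u \<in> S \<and> cst v < cst u" unfolding S_def cst_def by (auto simp: not_le)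
    from bchoice[OF this] obtain \<sigma> where \<sigma>: "\<And>v. v \<in> S \<Longrightarrow> \<sigma> v \<in> S \<and> cst v < cst (\<sigma> v)" by blast
    have "\<forall>v\<in>S. \<exists>e>0. \<forall>w'. (\<forall>i\<in>{1..N}. \<forall>k. \<bar>w' i $ k - W v i $ k\<bar> < e) \<longrightarrow>
            measure M {\<omega> \<in> space M. a0 + (\<Sum>i\<in>{1..N}. \<xi> i \<omega> *\<^sub>R w' i) \<in> Q} < cst (\<sigma> v)"
    proof
      fix v assume v: "v \<in> S"
      have "measure M {\<omega> \<in> space M. a0 + (\<Sum>i\<in>{1..N}. \<xi> i \<omega> *\<^sub>R W v i) \<in> Q} < cst (\<sigma> v)"
        using \<sigma>[OF v] cst_eq[OF v] by (simp add: Z_def)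
      from usc_prob[OF assms(1) assms(7) _ assms(12) assms(15) this]
      show "\<exists>e>0. \<forall>w'. (\<forall>i\<in>{1..N}. \<forall>k. \<bar>w' i $ k - W v i $ k\<bar> < e) \<longrightarrow>
            measure M {\<omega> \<in> space M. a0 + (\<Sum>i\<in>{1..N}. \<xi> i \<omega> *\<^sub>R w' i) \<in> Q} < cst (\<sigma> v)"
        by simp
    qed
    from bchoice[OF this] obtain \<epsilon> where \<epsilon>: "\<And>v. v \<in> S \<Longrightarrow> \<epsilon> v > 0 \<and> (\<forall>w'. (\<forall>i\<in>{1..N}. \<forall>k. \<bar>w' i $ k - W v i $ k\<bar> < \<epsilon> v) \<longrightarrow>
            measure M {\<omega> \<in> space M. a0 + (\<Sum>i\<in>{1..N}. \<xi> i \<omega> *\<^sub>R w' i) \<in> Q} < cst (\<sigma> v))" by blast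
    define Ob where "Ob v = \<Inter> ((\<lambda>(i,k). {u. ell k i u \<in> ball (ell k i v) (\<epsilon> v)}) ` ({1..N} \<times> (UNIV::'n set)))" for v
    have Omem: "u \<in> Ob v \<longleftrightarrow> (\<forall>i\<in>{1..N}. \<forall>k. ell k i u \<in> ball (ell k i v) (\<epsilon> v))" for u v
      unfolding Ob_def by auto
    have Oop: "openin weak_L2_topology (Ob v)" for v
      unfolding Ob_def using assms(3) by (intro openin_Inter) (auto intro: Oopen simp del: mem_ball)
    have vO: "v \<in> Ob v" if "v \<in> S" for v using \<epsilon>[OF that] by (simp add: Omem)
    have Olt: "cst u < cst (\<sigma> v)" if "v \<in> S" "u \<in> S" "u \<in> Ob v" for u v
    proof -
      have "\<forall>i\<in>{1..N}. \<forall>k. \<bar>W u i $ k - W v i $ k\<bar> < \<epsilon> v"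
        using that(3) by (auto simp: Omem W_def dist_real_def abs_minus_commute)
      with \<epsilon>[OF that(1)] have "measure M {\<omega> \<in> space M. Z (W u) \<omega> \<in> Q} < cst (\<sigma> v)"
        by (simp add: Z_def)
      with cst_eq[OF that(2)] show ?thesis by simp
    qed
    have "S \<subseteq> \<Union> (Ob ` S)" using vO by blast
    moreover have "\<forall>U\<in>Ob ` S. openin weak_L2_topology U" using Oop by blast
    ultimately obtain \<F> where F: "finite \<F>" "\<F> \<subseteq> Ob ` S" "S \<subseteq> \<Union> \<F>"
      using assms(14) unfolding compactin_def S_def by meson
    from finite_subset_image[OF F(1) F(2)] obtain T where T: "T \<subseteq> S" "finite T" "\<F> = Ob ` T" by blast
    have Tne: "T \<noteq> {}" using F(3) T(3) assms(13) S_def by auto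
    define m where "m = Max ((\<lambda>t. cst (\<sigma> t)) ` T)"
    have "m \<in> (\<lambda>t. cst (\<sigma> t)) ` T" unfolding m_def using T(2) Tne by (intro Max_in) auto
    then obtain vs where vs: "vs \<in> T" "cst (\<sigma> vs) = m" by auto
    have "\<sigma> vs \<in> S" using \<sigma> vs(1) T(1) by blast
    then obtain t where t: "t \<in> T" "\<sigma> vs \<in> Ob t" using F(3) T(3) by blast
    have "cst (\<sigma> vs) < cst (\<sigma> t)" using Olt[OF _ \<open>\<sigma> vs \<in> S\<close> t(2)] t(1) T(1) by blast
    moreover have "cst (\<sigma> t) \<le> m" unfolding m_def using T(2) t(1) by (intro Max_ge) auto
    ultimately show False using vs(2) by simp
  qed
qed


end
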